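(* There exists $n_0$ such that for every prime $n\ge n_0$ and every $q\in\{1,\dots,n-1\}$, every eigenvalue of the real symmetric matrix $\mathcal M_{n,q}$ defined below is at most $4-\frac{3}{5n}$.
   Context: For an integer $n\ge 3$ and an integer $q$, $\mathcal M_{n,q}=(a_{jk})_{j,k=0}^{n-1}$ is the $n\times n$ real matrix with diagonal entries $a_{jj}=2\cos\frac{2\pi qj}{n}$, with $a_{j,j+1}=a_{j+1,j}=1$ for $0\le j\le n-2$, $a_{0,n-1}=a_{n-1,0}=1$, and all other entries $0$. It is the matrix of the element $\tilde\Delta_n=x+x^{-1}+y+y^{-1}$ of the group algebra of the finite Heisenberg group $H_n$ in the $n$-dimensional representation $T_q$ given by $T_q(x)u_j=u_{j+1}$, $T_q(y)u_j=e^{2\pi iqj/n}u_j$ (indices mod $n$). *)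

theory Defs
  imports Complex_Main "HOL-Computational_Algebra.Primes" "Jordan_Normal_Form.Char_Poly"
begin

definition Mnq :: "nat \<Rightarrow> int \<Rightarrow> real mat" where
  "Mnq n q = mat n n (\<lambda>(j,k).
     if j = k then 2 * cos (2 * pi * real_of_int q * real j / real n)
     else if k = j + 1 \<or> j = k + 1 \<or> (j = 0 \<and> k = n - 1) \<or> (j = n - 1 \<and> k = 0) then 1
     else 0)"

end

theory Submission
  imports Defs
begin
lemma my_pi_gt3: "pi > 3"
proof (rule ccontr)
  assume "\<not> pi > 3"
  hence "pi \<le> 3" by simp
  moreover have "3 < 2 * pi" using pi_ge_two by simp
  ultimately have s: "sin (3::real) \<le> 0" by (intro sin_le_zero) auto
  have "\<bar>sin 3 - (\<Sum>m<11. sin_coeff m * 3 ^ m)\<bar> \<le> inverse (fact 11) * \<bar>3::real\<bar> ^ 11"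
    by (rule Maclaurin_sin_bound)
  moreover have "(\<Sum>m<11. sin_coeff m * (3::real) ^ m) = 3 - 27/6 + 243/120 - 2187/5040 + 19683/362880"
    by (simp add: sin_coeff_def lessThan_nat_numeral fact_numeral)
  moreover have "inverse (fact 11) * \<bar>3::real\<bar> ^ 11 = 177147/39916800"
    by (simp add: eval_nat_numeral fact_numeral)
  ultimately have "sin (3::real) \<ge> 3 - 27/6 + 243/120 - 2187/5040 + 19683/362880 - 177147/39916800"
    by linarith
  thus False using s by simp
qed



lemma path_bound:
  fixes u :: "nat \<Rightarrow> real"
  shows "(u a - u (a+m))\<^sup>2 \<le> real m * (\<Sum>t<m. (u (a+t) - u (a+t+1))\<^sup>2)"
proof (induction m)
  case 0 then show ?case by simp
next
  case (Suc m)
  define X where "X = u a - u (a+m)"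
  define y where "y = u (a+m) - u (a+m+1)"
  define S where "S = (\<Sum>t<m. (u (a+t) - u (a+t+1))\<^sup>2)"
  have IH: "X\<^sup>2 \<le> real m * S" using Suc X_def S_def by simp
  have eq: "u a - u (a + Suc m) = X + y" unfolding X_def y_def by simp
  have S1: "(\<Sum>t<Suc m. (u (a+t) - u (a+t+1))\<^sup>2) = S + y\<^sup>2" unfolding S_def y_def by simp
  have key: "(X+y)\<^sup>2 \<le> (real m + 1) * (S + y\<^sup>2)"
  proof (cases "m = 0")
    case True
    have "X = 0" using IH True by simp
    moreover have "S = 0" unfolding S_def using True by simp
    ultimately show ?thesis using True by simp
  next
    case False
    hence mp: "real m > 0" by simp
    have "real m * (X+y)\<^sup>2 \<le> (real m + 1) * X\<^sup>2 + real m * (real m + 1) * y\<^sup>2"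
    proof -
      have "0 \<le> (X - real m * y)\<^sup>2" by simp
      thus ?thesis by (simp add: power2_eq_square algebra_simps)
    qed
    also have "\<dots> \<le> (real m + 1) * (real m * S) + real m * (real m + 1) * y\<^sup>2"
      using IH by (simp add: mult_left_mono)
    also have "\<dots> = real m * ((real m + 1) * (S + y\<^sup>2))" by (simp add: algebra_simps)
    finally show ?thesis using mp by simp
  qed
  show ?case unfolding eq S1 using key by (simp add: add.commute)
qed

lemma diff_bound:
  fixes u :: "nat \<Rightarrow> real"
  assumes "a < L" "j < L"
  shows "(u a - u j)\<^sup>2 \<le> real (L-1) * (\<Sum>i<L-1. (u i - u (i+1))\<^sup>2)"
proof -
  have gen: "(u a - u (a+m))\<^sup>2 \<le> real (L-1) * (\<Sum>i<L-1. (u i - u (i+1))\<^sup>2)"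
    if "a + m < L" for a m
  proof -
    have "(\<Sum>t<m. (u (a+t) - u (a+t+1))\<^sup>2) = (\<Sum>i\<in>{a..<a+m}. (u i - u (i+1))\<^sup>2)"
      by (rule sum.reindex_bij_witness[of _ "\<lambda>i. i - a" "\<lambda>t. a + t"]) auto
    also have "\<dots> \<le> (\<Sum>i<L-1. (u i - u (i+1))\<^sup>2)"
      by (rule sum_mono2) (use that in auto)
    finally have s: "(\<Sum>t<m. (u (a+t) - u (a+t+1))\<^sup>2) \<le> (\<Sum>i<L-1. (u i - u (i+1))\<^sup>2)" .
    have m: "real m \<le> real (L-1)" using that by simp
    have "(u a - u (a+m))\<^sup>2 \<le> real m * (\<Sum>t<m. (u (a+t) - u (a+t+1))\<^sup>2)" by (rule path_bound)
    also have "\<dots> \<le> real (L-1) * (\<Sum>i<L-1. (u i - u (i+1))\<^sup>2)"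
      by (rule mult_mono[OF m s]) (auto intro: sum_nonneg)
    finally show ?thesis .
  qed
  show ?thesis
  proof (cases "a \<le> j")
    case True
    then obtain m where "j = a + m" using le_Suc_ex by blast
    then show ?thesis using gen[of a m] assms by simp
  next
    case False
    then obtain m where "a = j + m" using le_Suc_ex[of j a] by auto
    then show ?thesis using gen[of j m] assms by (simp add: power2_commute)
  qed
qed

lemma block:
  fixes u V :: "nat \<Rightarrow> real" and L :: nat
  assumes L2: "L \<ge> 2" and Vnn: "\<forall>i<L. V i \<ge> 0" and SK: "(\<Sum>i<L. V i) * real (L-1) \<ge> 1"
  shows "(\<Sum>i<L. (u i)\<^sup>2) \<le> 2 * real L * real (L-1) *
           ((\<Sum>i<L. V i * (u i)\<^sup>2) + (\<Sum>i<L-1. (u i - u (i+1))\<^sup>2))"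
proof -
  define P where "P = (\<Sum>i<L. V i * (u i)\<^sup>2)"
  define D where "D = (\<Sum>i<L-1. (u i - u (i+1))\<^sup>2)"
  define S where "S = (\<Sum>i<L. V i)"
  have P0: "P \<ge> 0" unfolding P_def using Vnn by (auto intro: sum_nonneg)
  have D0: "D \<ge> 0" unfolding D_def by (auto intro: sum_nonneg)
  have each: "(u a)\<^sup>2 \<le> 2 * real (L-1) * (P + D)" if a: "a < L" for a
  proof -
    have lj: "V j * ((u a)\<^sup>2 / 2 - real (L-1) * D) \<le> V j * (u j)\<^sup>2" if "j < L" for j
    proof -
      have "(u a - u j)\<^sup>2 \<le> real (L-1) * D" unfolding D_def using a that by (rule diff_bound)
      moreover have "(u a)\<^sup>2 \<le> 2 * (u j)\<^sup>2 + 2 * (u a - u j)\<^sup>2"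
      proof -
        have "0 \<le> (u a - 2 * u j)\<^sup>2" by simp
        thus ?thesis by (simp add: power2_eq_square algebra_simps)
      qed
      ultimately have "(u a)\<^sup>2 / 2 - real (L-1) * D \<le> (u j)\<^sup>2" by simp
      thus ?thesis using Vnn that by (simp add: mult_left_mono)
    qed
    have "S * ((u a)\<^sup>2 / 2 - real (L-1) * D) \<le> P"
      unfolding S_def P_def sum_distrib_right using lj by (intro sum_mono) auto
    hence h1: "S * (u a)\<^sup>2 / 2 \<le> P + S * real (L-1) * D" by (simp add: algebra_simps)
    define K where "K = S * real (L-1)"
    have K1: "K \<ge> 1" unfolding K_def S_def using SK L2 by (simp add: of_nat_diff)
    have "K * ((u a)\<^sup>2 / 2) \<le> real (L-1) * P + K * (real (L-1) * D)"
      using mult_right_mono[OF h1, of "real (L-1)"] unfolding K_def by (simp add: algebra_simps)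
    also have "\<dots> \<le> K * (real (L-1) * P) + K * (real (L-1) * D)"
    proof -
      have "real (L-1) * P \<le> K * (real (L-1) * P)"
        using K1 P0 mult_right_mono[OF K1, of "real (L-1) * P"] by simp
      thus ?thesis by simp
    qed
    finally have "K * ((u a)\<^sup>2 / 2) \<le> K * (real (L-1) * P + real (L-1) * D)"
      by (simp add: algebra_simps)
    hence "(u a)\<^sup>2 / 2 \<le> real (L-1) * P + real (L-1) * D" using K1 by simp
    thus ?thesis by (simp add: algebra_simps)
  qed
  have "(\<Sum>i<L. (u i)\<^sup>2) \<le> (\<Sum>i<L. 2 * real (L-1) * (P + D))" by (rule sum_mono) (use each in auto)
  also have "\<dots> = 2 * real L * real (L-1) * (P + D)" using L2 by (simp add: of_nat_diff algebra_simps)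
  finally show ?thesis unfolding P_def D_def .
qed


lemma shift_sum1:
  fixes f :: "nat \<Rightarrow> real"
  assumes "n > 0"
  shows "(\<Sum>s<n. f ((s+1) mod n)) = (\<Sum>s<n. f s)"
proof -
  obtain m where n: "n = Suc m" using assms gr0_implies_Suc by blast
  have "(\<Sum>s<n. f ((s+1) mod n)) = (\<Sum>s<m. f ((s+1) mod n)) + f ((m+1) mod n)"
    unfolding n by simp
  also have "(\<Sum>s<m. f ((s+1) mod n)) = (\<Sum>s<m. f (Suc s))"
    by (rule sum.cong) (auto simp: n)
  also have "f ((m+1) mod n) = f 0" by (simp add: n)
  also have "(\<Sum>s<m. f (Suc s)) + f 0 = (\<Sum>s<Suc m. f s)"
    using sum.lessThan_Suc_shift[of f m] by linarith
  finally show ?thesis by (simp add: n)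
qed

lemma shift_sum:
  fixes f :: "nat \<Rightarrow> real"
  assumes "n > 0"
  shows "(\<Sum>s<n. f ((s+i) mod n)) = (\<Sum>s<n. f s)"
proof (induction i)
  case 0
  have "(\<Sum>s<n. f (s mod n)) = (\<Sum>s<n. f s)" by (rule sum.cong) auto
  then show ?case by simp
next
  case (Suc i)
  have "(\<Sum>s<n. f ((s + Suc i) mod n)) = (\<Sum>s<n. (\<lambda>t. f ((t+i) mod n)) ((s+1) mod n))"
    by (rule sum.cong) (auto simp: mod_add_left_eq)
  also have "\<dots> = (\<Sum>s<n. f ((s+i) mod n))" by (rule shift_sum1[OF assms])
  finally show ?case using Suc by simp
qed

lemma averaging:
  fixes v V :: "nat \<Rightarrow> real" and n L :: nat
  assumes n0: "n > 0" and L2: "L \<ge> 2" and Vnn: "\<forall>j<n. V j \<ge> 0"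
    and SK: "\<forall>s<n. (\<Sum>i<L. V ((s+i) mod n)) * real (L-1) \<ge> 1"
  shows "(\<Sum>j<n. (v j)\<^sup>2) \<le> 2 * real L * real (L-1) *
           ((\<Sum>j<n. V j * (v j)\<^sup>2) + (\<Sum>j<n. (v j - v ((j+1) mod n))\<^sup>2))"
proof -
  define N where "N = (\<Sum>j<n. (v j)\<^sup>2)"
  define P where "P = (\<Sum>j<n. V j * (v j)\<^sup>2)"
  define D where "D = (\<Sum>j<n. (v j - v ((j+1) mod n))\<^sup>2)"
  have P0: "P \<ge> 0" unfolding P_def using Vnn by (auto intro: sum_nonneg)
  have D0: "D \<ge> 0" unfolding D_def by (auto intro: sum_nonneg)
  have blk: "(\<Sum>i<L. (v ((s+i) mod n))\<^sup>2) \<le> 2 * real L * real (L-1) *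
      ((\<Sum>i<L. V ((s+i) mod n) * (v ((s+i) mod n))\<^sup>2)
       + (\<Sum>i<L-1. (v ((s+i) mod n) - v ((s+(i+1)) mod n))\<^sup>2))" if "s < n" for s
    using block[of L "\<lambda>i. V ((s+i) mod n)" "\<lambda>i. v ((s+i) mod n)"] L2 Vnn SK that n0 by auto
  have e1: "(\<Sum>s<n. \<Sum>i<L. (v ((s+i) mod n))\<^sup>2) = real L * N"
    unfolding N_def by (subst sum.swap) (simp add: shift_sum[OF n0, of "\<lambda>j. (v j)\<^sup>2"])
  have e2: "(\<Sum>s<n. \<Sum>i<L. V ((s+i) mod n) * (v ((s+i) mod n))\<^sup>2) = real L * P"
    unfolding P_def by (subst sum.swap) (simp add: shift_sum[OF n0, of "\<lambda>j. V j * (v j)\<^sup>2"])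
  have e3: "(\<Sum>s<n. \<Sum>i<L-1. (v ((s+i) mod n) - v ((s+(i+1)) mod n))\<^sup>2) = real (L-1) * D"
  proof -
    have "(\<Sum>s<n. \<Sum>i<L-1. (v ((s+i) mod n) - v ((s+(i+1)) mod n))\<^sup>2)
        = (\<Sum>i<L-1. \<Sum>s<n. (\<lambda>j. (v j - v ((j+1) mod n))\<^sup>2) ((s+i) mod n))"
      by (subst sum.swap) (intro sum.cong refl, simp add: mod_add_left_eq add.assoc mod_Suc_eq)
    also have "\<dots> = real (L-1) * D" unfolding D_def by (simp only: shift_sum[OF n0, of "\<lambda>j. (v j - v ((j+1) mod n))\<^sup>2"]) simp
    finally show ?thesis .
  qed
  have "real L * N \<le> (\<Sum>s<n. 2 * real L * real (L-1) *
      ((\<Sum>i<L. V ((s+i) mod n) * (v ((s+i) mod n))\<^sup>2)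
       + (\<Sum>i<L-1. (v ((s+i) mod n) - v ((s+(i+1)) mod n))\<^sup>2)))"
    unfolding e1[symmetric] by (rule sum_mono) (use blk in auto)
  also have "\<dots> = 2 * real L * real (L-1) * ((\<Sum>s<n. \<Sum>i<L. V ((s+i) mod n) * (v ((s+i) mod n))\<^sup>2)
     + (\<Sum>s<n. \<Sum>i<L-1. (v ((s+i) mod n) - v ((s+(i+1)) mod n))\<^sup>2))"
    by (simp only: distrib_left sum_distrib_left sum.distrib)
  also have "\<dots> = 2 * real L * real (L-1) * (real L * P + real (L-1) * D)"
    by (simp only: e2 e3)
  also have "\<dots> \<le> 2 * real L * real (L-1) * (real L * P + real L * D)"
    using D0 L2 by (intro mult_left_mono add_left_mono mult_right_mono) auto
  finally have "real L * N \<le> real L * (2 * real L * real (L-1) * (P + D))"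
    by (simp add: algebra_simps)
  hence "N \<le> 2 * real L * real (L-1) * (P + D)" using L2 by simp
  thus ?thesis unfolding N_def P_def D_def .
qed


definition rr :: "nat \<Rightarrow> int \<Rightarrow> nat \<Rightarrow> int" where
  "rr n q j = (q * int j) mod int n"

definition dd :: "nat \<Rightarrow> int \<Rightarrow> nat \<Rightarrow> nat" where
  "dd n q j = min (nat (rr n q j)) (n - nat (rr n q j))"

lemma cos_dd:
  assumes n0: "n > 0"
  shows "cos (2 * pi * real_of_int q * real j / real n) = cos (2 * pi * real (dd n q j) / real n)"
proof -
  define R where "R = rr n q j"
  define K where "K = (q * int j) div int n"
  have qj: "q * int j = K * int n + R" unfolding R_def K_def rr_def by simp
  have R0: "0 \<le> R" "R < int n" unfolding R_def rr_def using n0 by auto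
  have "2 * pi * real_of_int q * real j / real n = 2 * pi * real_of_int R / real n + 2 * pi * real_of_int K"
  proof -
    have h: "real_of_int q * real j = real_of_int K * real n + real_of_int R"
      using arg_cong[OF qj, of real_of_int] by simp
    have "2 * pi * real_of_int q * real j / real n = 2 * pi * (real_of_int q * real j) / real n"
      by (simp add: mult.assoc)
    also have "\<dots> = 2 * pi * (real_of_int K * real n + real_of_int R) / real n" by (simp only: h)
    also have "\<dots> = 2 * pi * real_of_int R / real n + 2 * pi * real_of_int K"
      using n0 by (simp add: field_simps)
    finally show ?thesis .
  qed
  hence c1: "cos (2 * pi * real_of_int q * real j / real n) = cos (2 * pi * real_of_int R / real n)"
    using sin_cos_eq_iff by metis
  have rR: "real (nat R) = real_of_int R" using R0 by simp
  show ?thesis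
  proof (cases "nat R \<le> n - nat R")
    case True
    then have "dd n q j = nat R" unfolding dd_def R_def by simp
    then show ?thesis using c1 rR by simp
  next
    case False
    then have d: "dd n q j = n - nat R" unfolding dd_def R_def by simp
    have "real (n - nat R) = real n - real_of_int R" using R0 rR by (simp add: of_nat_diff)
    hence "2 * pi * real (dd n q j) / real n = 2 * pi - 2 * pi * real_of_int R / real n"
      using n0 d by (simp add: field_simps)
    then show ?thesis using c1 by simp
  qed
qed

lemma dd_le: "2 * dd n q j \<le> n"
  unfolding dd_def by simp

lemma sin_lower:
  fixes y :: real assumes "0 \<le> y" "y \<le> 1/2"
  shows "(18/5) * y\<^sup>2 \<le> 4 * (sin y)\<^sup>2"
proof -
  have "\<bar>sin y - (\<Sum>m<3. sin_coeff m * y ^ m)\<bar> \<le> inverse (fact 3) * \<bar>y\<bar> ^ 3"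
    by (rule Maclaurin_sin_bound)
  moreover have "(\<Sum>m<3. sin_coeff m * y ^ m) = y"
    by (simp add: sin_coeff_def eval_nat_numeral)
  moreover have "inverse (fact 3) * \<bar>y\<bar> ^ 3 = y^3/6" using assms
    by (simp add: eval_nat_numeral fact_numeral)
  ultimately have s: "y - y^3/6 \<le> sin y" by linarith
  have "y^3/6 \<le> y * (1/24)"
  proof -
    have "y^2 \<le> 1/4" using assms power_mono[of y "1/2" 2] by (simp add: power2_eq_square)
    hence "y * y^2 \<le> y * (1/4)" using assms mult_left_mono by blast
    thus ?thesis by (simp add: power3_eq_cube power2_eq_square)
  qed
  hence "(23/24) * y \<le> sin y" using s by linarith
  moreover have "0 \<le> (23/24) * y" using assms by simp
  ultimately have "((23/24) * y)\<^sup>2 \<le> (sin y)\<^sup>2" by (rule power_mono)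
  hence "529 * (y * y) \<le> sin y * sin y * 576" by (simp add: power2_eq_square)
  moreover have "0 \<le> y * y" by simp
  ultimately show ?thesis unfolding power2_eq_square by linarith
qed

lemma V_lower:
  assumes n0: "n > 0" and T8: "8 * T \<le> n"
  shows "(18/5) * (pi * real (min (dd n q j) T) / real n)\<^sup>2
           \<le> 2 - 2 * cos (2 * pi * real_of_int q * real j / real n)"
proof -
  define d where "d = dd n q j"
  define m where "m = min d T"
  define y where "y = pi * real m / real n"
  have y0: "0 \<le> y" unfolding y_def by simp
  have "real m \<le> real T" unfolding m_def by simp
  hence "y \<le> pi * real T / real n" unfolding y_def using n0 by (simp add: divide_right_mono)
  also have "\<dots> \<le> 4 * real T / real n" using pi_less_4 n0 by (intro divide_right_mono mult_right_mono) auto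
  also have "\<dots> \<le> 1/2" using T8 n0 by (simp add: field_simps)
  finally have y1: "y \<le> 1/2" .
  have "cos (2 * pi * real d / real n) \<le> cos (2 * y)"
  proof (rule cos_monotone_0_pi_le)
    show "0 \<le> 2 * y" using y0 by simp
    show "2 * y \<le> 2 * pi * real d / real n" unfolding y_def m_def using n0
      by (simp add: divide_right_mono)
    have "2 * real d \<le> real n" using dd_le[of n q j] unfolding d_def by linarith
    hence "2 * pi * real d \<le> pi * real n" by (simp add: mult_left_mono)
    thus "2 * pi * real d / real n \<le> pi" using n0 by (simp add: field_simps)
  qed
  moreover have "2 - 2 * cos (2 * y) = 4 * (sin y)\<^sup>2"
    by (simp add: cos_double sin_squared_eq)
  moreover have "(18/5) * y\<^sup>2 \<le> 4 * (sin y)\<^sup>2" using sin_lower y0 y1 by blast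
  ultimately show ?thesis using cos_dd[OF n0, of q j] unfolding y_def m_def d_def by linarith
qed


lemma inj_window:
  assumes p: "prime n" and q1: "1 \<le> q" and q2: "q \<le> int n - 1" and Ln: "L \<le> n"
  shows "inj_on (\<lambda>i. rr n q ((s+i) mod n)) {..<L}"
proof (rule inj_onI)
  fix i i' assume i: "i \<in> {..<L}" and i': "i' \<in> {..<L}"
    and eq: "rr n q ((s+i) mod n) = rr n q ((s+i') mod n)"
  have n0: "n > 0" using p prime_gt_0_nat by blast
  define a where "a = int ((s+i) mod n)"
  define b where "b = int ((s+i') mod n)"
  have "(q * a) mod int n = (q * b) mod int n" using eq unfolding rr_def a_def b_def by simp
  hence "int n dvd q * a - q * b" by (simp add: mod_eq_dvd_iff)
  hence "int n dvd q * (a - b)" by (simp add: right_diff_distrib)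
  moreover have "prime (int n)" using p by simp
  ultimately have "int n dvd q \<or> int n dvd (a - b)" using prime_dvd_mult_iff by blast
  moreover have "\<not> int n dvd q"
  proof
    assume "int n dvd q"
    then have "int n \<le> q" using q1 by (simp add: zdvd_imp_le)
    thus False using q2 by simp
  qed
  ultimately have "int n dvd (a - b)" by blast
  hence "a mod int n = b mod int n" by (simp add: mod_eq_dvd_iff)
  hence "(int s + int i) mod int n = (int s + int i') mod int n"
    unfolding a_def b_def by (simp add: zmod_int of_nat_mod)
  hence "int n dvd (int s + int i) - (int s + int i')" by (simp add: mod_eq_dvd_iff)
  hence dv: "int n dvd (int i - int i')" by simp
  then obtain k where k: "int i - int i' = int n * k" by (auto simp: dvd_def)
  have "\<bar>int i - int i'\<bar> < int n" using i i' Ln by auto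
  hence "\<bar>int n * k\<bar> < int n" using k by simp
  hence "int n * \<bar>k\<bar> < int n * 1" by (simp add: abs_mult)
  hence "\<bar>k\<bar> < 1" using n0 mult_less_cancel_left_pos[of "int n" "\<bar>k\<bar>" 1] by simp
  hence "k = 0" by simp
  thus "i = i'" using k by simp
qed

lemma card_small:
  assumes p: "prime n" and q1: "1 \<le> q" and q2: "q \<le> int n - 1" and Ln: "L \<le> n"
  shows "card {i\<in>{..<L}. dd n q ((s+i) mod n) \<le> t} \<le> 2*t+1"
proof -
  have n0: "n > 0" using p prime_gt_0_nat by blast
  define A where "A = {i\<in>{..<L}. dd n q ((s+i) mod n) \<le> t}"
  define f where "f = (\<lambda>i. rr n q ((s+i) mod n))"
  have inj: "inj_on f A" unfolding f_def A_def
    by (rule inj_on_subset[OF inj_window[OF p q1 q2 Ln]]) auto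
  have sub: "f ` A \<subseteq> {0..int t} \<union> {int n - int t..int n - 1}"
  proof
    fix x assume "x \<in> f ` A"
    then obtain i where iA: "i \<in> A" and x: "x = f i" by auto
    have x0: "0 \<le> x" "x < int n" unfolding x f_def rr_def using n0 by auto
    have "min (nat x) (n - nat x) \<le> t" using iA unfolding A_def dd_def x f_def by simp
    hence "nat x \<le> t \<or> n - nat x \<le> t" by linarith
    thus "x \<in> {0..int t} \<union> {int n - int t..int n - 1}" using x0 by auto
  qed
  have "card A = card (f ` A)" using inj by (simp add: card_image)
  also have "\<dots> \<le> card ({0..int t} \<union> {int n - int t..int n - 1})"
    by (rule card_mono[OF _ sub]) auto
  also have "\<dots> \<le> card {0..int t} + card {int n - int t..int n - 1}" by (rule card_Un_le)
  also have "\<dots> = 2*t+1" by simp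
  finally show ?thesis unfolding A_def .
qed

lemma minsq: "real (min d T)^2 = (\<Sum>t<T. if t < d then 2 * real t + 1 else 0)"
proof (induction T)
  case 0 then show ?case by simp
next
  case (Suc T)
  show ?case
  proof (cases "T < d")
    case True
    hence "min d (Suc T) = Suc T" "min d T = T" by auto
    then show ?thesis using Suc True by (simp add: power2_eq_square algebra_simps)
  next
    case False
    hence "min d (Suc T) = d" "min d T = d" by auto
    then show ?thesis using Suc False by simp
  qed
qed

lemma closed_sum:
  "(\<Sum>t<k. (2 * real t + 1) * (2 * real T - 2 * real t))
     = 2 * real T * real k ^ 2 - (real k - 1) * real k * (4 * real k + 1) / 3"
proof (induction k)
  case 0 then show ?case by simp
next
  case (Suc k)
  have "(\<Sum>t<Suc k. (2 * real t + 1) * (2 * real T - 2 * real t))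
      = (2 * real T * real k ^ 2 - (real k - 1) * real k * (4 * real k + 1) / 3)
        + (2 * real k + 1) * (2 * real T - 2 * real k)"
    by (simp only: sum.lessThan_Suc Suc.IH)
  also have "\<dots> = 2 * real T * real (Suc k) ^ 2 - (real (Suc k) - 1) * real (Suc k) * (4 * real (Suc k) + 1) / 3"
    by (simp add: field_simps power2_eq_square)
  finally show ?case .
qed


lemma window_sum:
  assumes p: "prime n" and q1: "1 \<le> q" and q2: "q \<le> int n - 1"
    and T8: "8 * T \<le> n" and Ln: "2*T+1 \<le> n"
  shows "(12/5) * pi\<^sup>2 * real T ^ 3 / (real n)\<^sup>2
      \<le> (\<Sum>i<2*T+1. 2 - 2 * cos (2 * pi * real_of_int q * real ((s+i) mod n) / real n))"
proof -
  have n0: "n > 0" using p prime_gt_0_nat by blast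
  define L where "L = 2*T+1"
  define d where "d = (\<lambda>i. dd n q ((s+i) mod n))"
  have term_lb: "(18/5) * (pi / real n)\<^sup>2 * real (min (d i) T)^2
      \<le> 2 - 2 * cos (2 * pi * real_of_int q * real ((s+i) mod n) / real n)" for i
    using V_lower[OF n0 T8, of q "(s+i) mod n"] unfolding d_def by (simp add: power_divide power_mult_distrib)
  have cardge: "real (card {i\<in>{..<L}. t < d i}) \<ge> 2 * real T - 2 * real t" for t
  proof -
    have "{..<L} = {i\<in>{..<L}. t < d i} \<union> {i\<in>{..<L}. d i \<le> t}" by auto
    moreover have "{i\<in>{..<L}. t < d i} \<inter> {i\<in>{..<L}. d i \<le> t} = {}" by auto
    ultimately have "card {..<L} = card {i\<in>{..<L}. t < d i} + card {i\<in>{..<L}. d i \<le> t}"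
      by (metis (no_types, lifting) card_Un_disjoint finite_Un finite_lessThan)
    moreover have "card {i\<in>{..<L}. d i \<le> t} \<le> 2*t+1"
      unfolding d_def using card_small[OF p q1 q2, of L s t] Ln L_def by simp
    ultimately show ?thesis unfolding L_def by simp
  qed
  have "(\<Sum>i<L. real (min (d i) T)^2) = (\<Sum>i<L. \<Sum>t<T. if t < d i then 2 * real t + 1 else 0)"
    by (simp add: minsq)
  also have "\<dots> = (\<Sum>t<T. \<Sum>i<L. if t < d i then 2 * real t + 1 else 0)" by (rule sum.swap)
  also have "\<dots> = (\<Sum>t<T. (2 * real t + 1) * real (card {i\<in>{..<L}. t < d i}))"
    by (simp add: sum.If_cases Int_def mult.commute)
  also have "\<dots> \<ge> (\<Sum>t<T. (2 * real t + 1) * (2 * real T - 2 * real t))"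
    by (rule sum_mono) (use cardge in \<open>auto intro: mult_left_mono\<close>)
  finally have s1: "(\<Sum>i<L. real (min (d i) T)^2) \<ge> 2 * real T * real T ^ 2 - (real T - 1) * real T * (4 * real T + 1) / 3"
    by (simp add: closed_sum)
  have s2: "2 * real T * real T ^ 2 - (real T - 1) * real T * (4 * real T + 1) / 3 \<ge> 2 * real T ^ 3 / 3"
  proof -
    have "2 * real T * real T ^ 2 - (real T - 1) * real T * (4 * real T + 1) / 3
        = 2 * real T ^ 3 / 3 + (3 * real T ^ 2 + real T) / 3"
      by (simp add: field_simps power2_eq_square power3_eq_cube)
    moreover have "0 \<le> (3 * real T ^ 2 + real T) / 3" by simp
    ultimately show ?thesis by linarith
  qed
  have "(12/5) * pi\<^sup>2 * real T ^ 3 / (real n)\<^sup>2 = (18/5) * (pi / real n)\<^sup>2 * (2 * real T ^ 3 / 3)"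
    by (simp add: power_divide field_simps)
  also have "\<dots> \<le> (18/5) * (pi / real n)\<^sup>2 * (\<Sum>i<L. real (min (d i) T)^2)"
    using s1 s2 by (intro mult_left_mono) auto
  also have "\<dots> = (\<Sum>i<L. (18/5) * (pi / real n)\<^sup>2 * real (min (d i) T)^2)"
    by (simp add: sum_distrib_left)
  also have "\<dots> \<le> (\<Sum>i<L. 2 - 2 * cos (2 * pi * real_of_int q * real ((s+i) mod n) / real n))"
    by (rule sum_mono) (rule term_lb)
  finally show ?thesis unfolding L_def .
qed


lemma entry_eq:
  assumes n3: "n \<ge> 3" and j: "j < n" and k: "k < n"
  shows "Mnq n q $$ (j,k) * x =
     (if k = j then 2 * cos (2 * pi * real_of_int q * real j / real n) * x else 0)
   + (if k = (j+1) mod n then x else 0) + (if k = (j+n-1) mod n then x else 0)"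
proof -
  define a where "a = (j+1) mod n"
  define b where "b = (j+n-1) mod n"
  define c where "c = 2 * cos (2 * pi * real_of_int q * real j / real n)"
  have a': "a = (if j = n-1 then 0 else j+1)" unfolding a_def using j by (auto simp: mod_if)
  have b': "b = (if j = 0 then n-1 else j-1)"
  proof (cases "j = 0")
    case True then show ?thesis unfolding b_def using n3 by simp
  next
    case False
    have "(j+n-1) mod n = ((j-1)+n) mod n" using False by (intro arg_cong[where f="\<lambda>x. x mod n"]) simp
    also have "\<dots> = (j-1) mod n" by (rule mod_add_self2)
    also have "\<dots> = j-1" using j by simp
    finally show ?thesis unfolding b_def using False by simp
  qed
  have aj: "a \<noteq> j" using a' n3 j by (cases "j = n-1") auto
  have bj: "b \<noteq> j" using b' n3 j by (cases "j = 0") auto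
  have ab: "a \<noteq> b" using a' b' n3 j by (cases "j = 0"; cases "j = n-1") auto
  have cond: "(k = j + 1 \<or> j = k + 1 \<or> (j = 0 \<and> k = n - 1) \<or> (j = n - 1 \<and> k = 0)) \<longleftrightarrow> (k = a \<or> k = b)"
    if "k \<noteq> j" using that a' b' n3 j k by (cases "j = 0"; cases "j = n-1") auto
  have M: "Mnq n q $$ (j,k) = (if j = k then c else if k = j + 1 \<or> j = k + 1 \<or> (j = 0 \<and> k = n - 1) \<or> (j = n - 1 \<and> k = 0) then 1 else 0)"
    unfolding Mnq_def c_def using j k by (simp add: index_mat)
  have goal: "Mnq n q $$ (j,k) * x = (if k = j then c * x else 0) + (if k = a then x else 0) + (if k = b then x else 0)"
  proof (cases "k = j")
    case True
    then have "Mnq n q $$ (j,k) = c" using M by simp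
    then show ?thesis using True aj bj by simp
  next
    case False
    note cj = cond[OF False]
    show ?thesis
    proof (cases "k = a")
      case True
      then have "Mnq n q $$ (j,k) = 1" using M False cj by auto
      then show ?thesis using True False ab by simp
    next
      case ka: False
      show ?thesis
      proof (cases "k = b")
        case True
        then have "Mnq n q $$ (j,k) = 1" using M False cj by auto
        then show ?thesis using True False ka by simp
      next
        case kb: False
        then have "Mnq n q $$ (j,k) = 0" using M False cj ka by auto
        then show ?thesis using kb False ka by simp
      qed
    qed
  qed
  then show ?thesis unfolding a_def b_def c_def .
qed

lemma Mv_entry:
  assumes n3: "n \<ge> 3" and j: "j < n" and v: "v \<in> carrier_vec n"
  shows "(Mnq n q *\<^sub>v v) $ j = 2 * cos (2 * pi * real_of_int q * real j / real n) * v $ j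
          + v $ ((j+1) mod n) + v $ ((j+n-1) mod n)"
proof -
  have dims: "dim_row (Mnq n q) = n" "dim_col (Mnq n q) = n" unfolding Mnq_def by auto
  have "(Mnq n q *\<^sub>v v) $ j = (\<Sum>k\<in>{0..<n}. Mnq n q $$ (j,k) * v $ k)"
    using j v dims by (simp add: mult_mat_vec_def scalar_prod_def)
  also have "\<dots> = (\<Sum>k\<in>{0..<n}.
     (if k = j then 2 * cos (2 * pi * real_of_int q * real j / real n) * v $ k else 0)
   + (if k = (j+1) mod n then v $ k else 0) + (if k = (j+n-1) mod n then v $ k else 0))"
    by (rule sum.cong) (use entry_eq[OF n3 j] in auto)
  also have "\<dots> = 2 * cos (2 * pi * real_of_int q * real j / real n) * v $ j
          + v $ ((j+1) mod n) + v $ ((j+n-1) mod n)"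
    using j n3 by (simp add: sum.distrib)
  finally show ?thesis .
qed


lemma quad_identity:
  assumes n3: "n \<ge> 3" and v: "v \<in> carrier_vec n" and ev: "Mnq n q *\<^sub>v v = e \<cdot>\<^sub>v v"
  shows "(4 - e) * (\<Sum>j<n. (v$j)\<^sup>2) =
     (\<Sum>j<n. (2 - 2 * cos (2 * pi * real_of_int q * real j / real n)) * (v$j)\<^sup>2)
     + (\<Sum>j<n. (v$j - v$((j+1) mod n))\<^sup>2)"
proof -
  have n0: "n > 0" using n3 by simp
  define c where "c = (\<lambda>j. 2 * cos (2 * pi * real_of_int q * real j / real n))"
  define w where "w = (\<lambda>j. v $ j)"
  define N where "N = (\<Sum>j<n. (w j)\<^sup>2)"
  define X where "X = (\<Sum>j<n. w j * w ((j+1) mod n))"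
  define C where "C = (\<Sum>j<n. c j * (w j)\<^sup>2)"
  have dv: "dim_vec v = n" using v by simp
  have row: "e * w j = c j * w j + w ((j+1) mod n) + w ((j+n-1) mod n)" if "j < n" for j
  proof -
    have "e * w j = (e \<cdot>\<^sub>v v) $ j" unfolding w_def using that dv by simp
    also have "\<dots> = (Mnq n q *\<^sub>v v) $ j" using ev by simp
    also have "\<dots> = c j * w j + w ((j+1) mod n) + w ((j+n-1) mod n)"
      unfolding c_def w_def by (rule Mv_entry[OF n3 that v])
    finally show ?thesis .
  qed
  have bk: "((j+1) mod n + n - 1) mod n = j" if "j < n" for j
  proof (cases "j = n-1")
    case True then show ?thesis using n3 by simp
  next
    case False
    hence "(j+1) mod n = j+1" using that by simp
    hence "((j+1) mod n + n - 1) mod n = (j + n) mod n" by simp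
    also have "\<dots> = j" using that by simp
    finally show ?thesis .
  qed
  have Y: "(\<Sum>j<n. w j * w ((j+n-1) mod n)) = X"
  proof -
    have "(\<Sum>j<n. w j * w ((j+n-1) mod n)) = (\<Sum>j<n. (\<lambda>j. w j * w ((j+n-1) mod n)) ((j+1) mod n))"
      by (rule shift_sum1[OF n0, symmetric])
    also have "\<dots> = X" unfolding X_def
    proof (rule sum.cong)
      fix j assume "j \<in> {..<n}"
      hence j: "j < n" by simp
      show "(\<lambda>j. w j * w ((j+n-1) mod n)) ((j+1) mod n) = w j * w ((j+1) mod n)"
        by (simp only: bk[OF j] mult.commute)
    qed simp
    finally show ?thesis .
  qed
  have eN: "e * N = C + 2 * X"
  proof -
    have "e * N = (\<Sum>j<n. w j * (e * w j))" unfolding N_def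
      by (simp add: sum_distrib_left power2_eq_square algebra_simps)
    also have "\<dots> = (\<Sum>j<n. c j * (w j)\<^sup>2 + w j * w ((j+1) mod n) + w j * w ((j+n-1) mod n))"
      by (rule sum.cong) (auto simp: row power2_eq_square algebra_simps)
    also have "\<dots> = C + X + (\<Sum>j<n. w j * w ((j+n-1) mod n))"
      unfolding C_def X_def by (simp add: sum.distrib)
    finally show ?thesis using Y by simp
  qed
  have Dq: "(\<Sum>j<n. (w j - w ((j+1) mod n))\<^sup>2) = 2 * N - 2 * X"
  proof -
    have "(\<Sum>j<n. (w j - w ((j+1) mod n))\<^sup>2)
       = (\<Sum>j<n. (w j)\<^sup>2) + (\<Sum>j<n. (\<lambda>j. (w j)\<^sup>2) ((j+1) mod n)) - 2 * X"
      unfolding X_def by (simp add: power2_diff sum.distrib sum_subtractf sum_distrib_left algebra_simps)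
    also have "(\<Sum>j<n. (\<lambda>j. (w j)\<^sup>2) ((j+1) mod n)) = N" unfolding N_def by (rule shift_sum1[OF n0])
    finally show ?thesis unfolding N_def by simp
  qed
  have Pq: "(\<Sum>j<n. (2 - c j) * (w j)\<^sup>2) = 2 * N - C"
    unfolding N_def C_def by (simp add: left_diff_distrib sum_subtractf sum_distrib_left)
  show ?thesis using eN Dq Pq unfolding c_def w_def N_def by (simp add: algebra_simps)
qed


lemma param_facts:
  fixes n :: nat
  assumes nbig: "n \<ge> 10000"
  defines "T \<equiv> nat \<lfloor>sqrt (real n / 5)\<rfloor>"
  shows "8 * T \<le> n" "2*T+1 \<le> n" "T \<ge> 1"
    "(24/5) * pi\<^sup>2 * real T ^ 4 / (real n)\<^sup>2 \<ge> 1"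
    "2 * real (2*T+1) * real (2*T) \<le> 5 * real n / 3"
proof -
  define x where "x = real n"
  define t where "t = real T"
  have x: "x \<ge> 10000" unfolding x_def using nbig by simp
  have s0: "0 \<le> sqrt (x/5)" using x by simp
  have tf: "t = of_int \<lfloor>sqrt (x / 5)\<rfloor>" unfolding t_def T_def x_def using s0 by simp
  have t1: "t \<le> sqrt (x/5)" using tf by simp
  have t2: "sqrt (x/5) < t + 1" using tf by linarith
  have t0: "0 \<le> t" unfolding t_def by simp
  have tsq: "t\<^sup>2 \<le> x/5"
  proof -
    have "t\<^sup>2 \<le> (sqrt (x/5))\<^sup>2" using t1 t0 by (rule power_mono)
    thus ?thesis using x by simp
  qed
  have tsq2: "x/5 < (t+1)\<^sup>2"
  proof -
    have "(sqrt (x/5))\<^sup>2 < (t+1)\<^sup>2" using t2 s0 by (rule power_strict_mono) simp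
    thus ?thesis using x by simp
  qed
  have tb: "t \<le> x/60 - 1"
  proof -
    have "x/5 \<le> (x/60 - 1)\<^sup>2"
    proof -
      have "(x/60 - 1)\<^sup>2 - x/5 = x * (x - 840) / 3600 + 1"
        by (simp add: power2_eq_square field_simps)
      moreover have "0 \<le> x * (x - 840)" using x by simp
      ultimately show ?thesis by simp
    qed
    hence "t\<^sup>2 \<le> (x/60 - 1)\<^sup>2" using tsq by linarith
    moreover have "0 \<le> x/60 - 1" using x by simp
    ultimately show ?thesis using power2_le_imp_le by blast
  qed
  show "8 * T \<le> n"
  proof -
    have "8 * t \<le> x" using tb x by linarith
    thus ?thesis unfolding t_def x_def by linarith
  qed
  show "2*T+1 \<le> n"
  proof -
    have "2 * t + 1 \<le> x" using tb x by linarith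
    thus ?thesis unfolding t_def x_def by linarith
  qed
  have ts6: "x/6 \<le> t\<^sup>2"
  proof -
    have "(t+1)\<^sup>2 = t\<^sup>2 + 2*t + 1" by (simp add: power2_eq_square algebra_simps)
    thus ?thesis using tsq2 tb by linarith
  qed
  show "T \<ge> 1"
  proof (rule ccontr)
    assume "\<not> T \<ge> 1"
    hence "T = 0" by simp
    hence "t = 0" unfolding t_def by simp
    thus False using ts6 x by simp
  qed
  show "(24/5) * pi\<^sup>2 * real T ^ 4 / (real n)\<^sup>2 \<ge> 1"
  proof -
    have pi9: "9 \<le> pi\<^sup>2"
    proof -
      have "3\<^sup>2 \<le> pi\<^sup>2" using my_pi_gt3 by (intro power_mono) auto
      thus ?thesis by simp
    qed
    have "(x/6)\<^sup>2 \<le> (t\<^sup>2)\<^sup>2" using ts6 x by (intro power_mono) auto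
    hence t4: "x\<^sup>2 / 36 \<le> t ^ 4" by (simp add: power2_eq_square power4_eq_xxxx field_simps)
    have "(24/5) * 9 * (x\<^sup>2/36) \<le> (24/5) * pi\<^sup>2 * t ^ 4"
      using pi9 t4 by (intro mult_mono) auto
    moreover have "0 \<le> x\<^sup>2" by simp
    ultimately have "x\<^sup>2 \<le> (24/5) * pi\<^sup>2 * t ^ 4" by linarith
    moreover have "x\<^sup>2 > 0" using x by simp
    ultimately show ?thesis unfolding t_def x_def by (simp add: field_simps)
  qed
  show "2 * real (2*T+1) * real (2*T) \<le> 5 * real n / 3"
  proof -
    have "2 * real (2*T+1) * real (2*T) = 8 * t\<^sup>2 + 4 * t" unfolding t_def
      by (simp add: power2_eq_square algebra_simps)
    also have "\<dots> \<le> 5 * x / 3" using tsq tb by linarith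
    finally show ?thesis unfolding x_def .
  qed
qed

theorem lemma2p3:
  shows "\<exists>n0::nat. \<forall>n::nat. \<forall>q::int. prime n \<and> n \<ge> n0 \<and> 1 \<le> q \<and> q \<le> int n - 1 \<longrightarrow>
           (\<forall>ev::real. eigenvalue (Mnq n q) ev \<longrightarrow> ev \<le> 4 - 3 / (5 * real n))"
proof (intro exI[of _ 10000] allI impI)
  fix n :: nat and q :: int and e :: real
  assume H: "prime n \<and> n \<ge> 10000 \<and> 1 \<le> q \<and> q \<le> int n - 1" and E: "eigenvalue (Mnq n q) e"
  have p: "prime n" and nbig: "n \<ge> 10000" and q1: "1 \<le> q" and q2: "q \<le> int n - 1" using H by auto
  have n3: "n \<ge> 3" using nbig by simp
  have n0: "n > 0" using nbig by simp
  have dimr: "dim_row (Mnq n q) = n" unfolding Mnq_def by simp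
  obtain v where v: "v \<in> carrier_vec n" and vnz: "v \<noteq> 0\<^sub>v n" and ev: "Mnq n q *\<^sub>v v = e \<cdot>\<^sub>v v"
    using E unfolding eigenvalue_def eigenvector_def dimr by blast
  define T where "T = nat \<lfloor>sqrt (real n / 5)\<rfloor>"
  note pf = param_facts[OF nbig, folded T_def]
  define L where "L = 2*T+1"
  define V where "V = (\<lambda>j. 2 - 2 * cos (2 * pi * real_of_int q * real j / real n))"
  define w where "w = (\<lambda>j. v $ j)"
  define N where "N = (\<Sum>j<n. (w j)\<^sup>2)"
  have Npos: "N > 0"
  proof -
    have "\<exists>j<n. v $ j \<noteq> 0"
    proof (rule ccontr)
      assume "\<not> (\<exists>j<n. v $ j \<noteq> 0)"
      hence z: "\<And>j. j < n \<Longrightarrow> v $ j = 0" by auto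
      have "v = 0\<^sub>v n" using v z by (intro eq_vecI) auto
      thus False using vnz by simp
    qed
    then obtain j where j: "j < n" "v $ j \<noteq> 0" by blast
    have "N \<ge> (w j)\<^sup>2" unfolding N_def using j by (intro member_le_sum) auto
    moreover have "(w j)\<^sup>2 > 0" unfolding w_def using j by simp
    ultimately show ?thesis by linarith
  qed
  have L2: "L \<ge> 2" unfolding L_def using pf(3) by simp
  have Vnn: "\<forall>j<n. V j \<ge> 0" unfolding V_def by (auto simp: cos_le_one)
  have SK: "\<forall>s<n. (\<Sum>i<L. V ((s+i) mod n)) * real (L-1) \<ge> 1"
  proof (intro allI impI)
    fix s assume "s < n"
    have ws: "(12/5) * pi\<^sup>2 * real T ^ 3 / (real n)\<^sup>2 \<le> (\<Sum>i<L. V ((s+i) mod n))"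
      unfolding L_def V_def by (rule window_sum[OF p q1 q2 pf(1) pf(2)])
    have "1 \<le> (24/5) * pi\<^sup>2 * real T ^ 4 / (real n)\<^sup>2" by (rule pf(4))
    also have "\<dots> = ((12/5) * pi\<^sup>2 * real T ^ 3 / (real n)\<^sup>2) * real (L-1)"
    proof -
      have l1: "real (L-1) = 2 * real T" unfolding L_def by simp
      have t4: "real T ^ 4 = real T ^ 3 * real T" by (simp add: eval_nat_numeral)
      show ?thesis unfolding l1 t4 by simp
    qed
    also have "\<dots> \<le> (\<Sum>i<L. V ((s+i) mod n)) * real (L-1)"
      using ws by (intro mult_right_mono) auto
    finally show "(\<Sum>i<L. V ((s+i) mod n)) * real (L-1) \<ge> 1" .
  qed
  have avg: "N \<le> 2 * real L * real (L-1) *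
           ((\<Sum>j<n. V j * (w j)\<^sup>2) + (\<Sum>j<n. (w j - w ((j+1) mod n))\<^sup>2))"
    unfolding N_def by (rule averaging[OF n0 L2 Vnn SK])
  have qi: "(4 - e) * N = (\<Sum>j<n. V j * (w j)\<^sup>2) + (\<Sum>j<n. (w j - w ((j+1) mod n))\<^sup>2)"
    unfolding N_def V_def w_def by (rule quad_identity[OF n3 v ev])
  define K where "K = 2 * real L * real (L-1)"
  have K: "K \<le> 5 * real n / 3" unfolding K_def L_def using pf(5) by simp
  have Kpos: "K > 0" unfolding K_def using L2 by simp
  have "N \<le> K * ((4 - e) * N)" using avg qi unfolding K_def by simp
  hence "1 * N \<le> (K * (4 - e)) * N" by (simp add: algebra_simps)
  hence k1: "1 \<le> K * (4 - e)" using Npos by (simp only: mult_le_cancel_right)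
  have "4 - e > 0"
  proof (rule ccontr)
    assume "\<not> 4 - e > 0"
    hence "4 - e \<le> 0" by simp
    hence "K * (4 - e) \<le> 0" using Kpos by (simp add: mult_nonneg_nonpos)
    thus False using k1 by simp
  qed
  hence "K * (4 - e) \<le> (5 * real n / 3) * (4 - e)" using K by (intro mult_right_mono) auto
  hence "1 \<le> (5 * real n / 3) * (4 - e)" using k1 by linarith
  hence "3 / (5 * real n) \<le> 4 - e" using n0 by (simp add: field_simps)
  thus "e \<le> 4 - 3 / (5 * real n)" by linarith
qed

end
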